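(* Let $f(x)=\mathbb{E}[F(x,\omega)]$ have nonempty solution set $X^*$ and optimal value $f^*$. Suppose: for every $\omega$, $F(\cdot,\omega)$ is convex and $C^1$; $f$ is $C^1$ with $L$-Lipschitz gradient; with $\bar w_{k,N_k}\triangleq\nabla f(x_k)-\frac1{N_k}\sum_{j=1}^{N_k}\nabla_xF(x_k,\omega_{j,k})$ there are $\nu_1,\nu_2>0$ with $\mathbb{E}[\|\bar w_{k,N_k}\|^2\mid\mathcal{F}_k]\le\frac{\nu_1^2\|x_k\|^2+\nu_2^2}{N_k}$ and $\mathbb{E}[\bar w_{k,N_k}\mid\mathcal{F}_k]=0$ a.s.; each $H_k$ is $\mathcal{F}_k$-measurable, symmetric positive definite, and $\underline\lambda\mathbf{I}\preceq H_k\preceq\overline\lambda_k\mathbf{I}$ a.s. with $\underline\lambda>0$, $\overline\lambda_k>0$; and $f$ has the quadratic growth property: there is $\alpha>0$ with $f(x)\ge f^*+\frac\alpha2\mathrm{dist}^2(x,X^* )$ for all $x$. Let $x_{k+1}=x_k-\gamma_kH_k\frac1{N_k}\sum_{j=1}^{N_k}\nabla_xF_{\mu_k}(x_k,\omega_{j,k})$, where $\{\mu_k\}$ is a non-increasing sequence of positive scalars and $\gamma_k\le\frac{\underline\lambda}{\overline\lambda_k^2(L+\mu_0)}$ for all $k\ge0$. Then for all $k$, $$\mathbb{E}[f_{\mu_{k+1}}(x_{k+1})\mid\mathcal{F}_k]-f^*\le(1-\underline\lambda\mu_k\gamma_k)(f_{\mu_k}(x_k)-f^* )+\frac{\underline\lambda\,\mathrm{dist}^2(x_0,X^*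 )}{2}\mu_k^2\gamma_k+\frac{(L+\mu_k)\overline\lambda_k^2(\nu_1^2\|x_k\|^2+\nu_2^2)}{2N_k}\gamma_k^2.$$
   Context: $F_\mu(x,\omega)\triangleq F(x,\omega)+\frac\mu2\|x-x_0\|^2$ and $f_\mu(x)\triangleq f(x)+\frac\mu2\|x-x_0\|^2$ for a fixed initial point $x_0$. $\omega_{1,k},\dots,\omega_{N_k,k}$ are the samples at iteration $k$; $\mathcal{F}_k=\sigma\{x_0,\dots,x_{k-1}\}$; $\mathrm{dist}(x,X)$ is the Euclidean distance from $x$ to $X$. *)

theory Defs
  imports "HOL-Analysis.Analysis" "HOL-Probability.Probability"
begin

definition solset :: "('a \<Rightarrow> real) \<Rightarrow> 'a set" where
  "solset f = {x. \<forall>y. f x \<le> f y}"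

definition optval :: "('a \<Rightarrow> real) \<Rightarrow> real" where
  "optval f = (INF x. f x)"

definition regf :: "('a::real_normed_vector \<Rightarrow> real) \<Rightarrow> 'a \<Rightarrow> real \<Rightarrow> 'a \<Rightarrow> real" where
  "regf g x0 \<mu> x = g x + \<mu> / 2 * (norm (x - x0))\<^sup>2"

end

theory Submission
  imports Defs
begin


lemma mat_sym_inner:
  fixes A :: "real^'n^'n"
  assumes "transpose A = A"
  shows "u \<bullet> (A *v v) = v \<bullet> (A *v u)"
proof -
  have "u \<bullet> (A *v v) = (u v* A) \<bullet> v" by (simp add: dot_lmul_matrix)
  also have "\<dots> = (transpose A *v u) \<bullet> v" by simp
  also have "\<dots> = v \<bullet> (A *v u)" using assms by (simp add: inner_commute)
  finally show ?thesis .
qed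

lemma psd_cs:
  fixes A :: "real^'n^'n"
  assumes sym: "transpose A = A" and lo: "lo > 0"
    and b: "\<forall>v. lo * (v \<bullet> v) \<le> v \<bullet> (A *v v)"
  shows "(u \<bullet> (A *v v))\<^sup>2 \<le> (u \<bullet> (A *v u)) * (v \<bullet> (A *v v))"
proof (cases "v = 0")
  case True then show ?thesis by (simp add: matrix_vector_mult_0_right)
next
  case False
  have qv: "v \<bullet> (A *v v) > 0"
    using b lo False by (smt (verit) inner_gt_zero_iff mult_pos_pos)
  define t where "t = (u \<bullet> (A *v v)) / (v \<bullet> (A *v v))"
  have "0 \<le> (u - t *\<^sub>R v) \<bullet> (A *v (u - t *\<^sub>R v))"
    using b lo by (smt (verit) inner_ge_zero mult_nonneg_nonneg)
  also have "\<dots> = u \<bullet> (A *v u) - 2 * t * (u \<bullet> (A *v v)) + t\<^sup>2 * (v \<bullet> (A *v v))"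
    using mat_sym_inner[OF sym, of v u]
    by (simp add: matrix_vector_mult_diff_distrib matrix_vector_mult_scaleR inner_diff_left inner_diff_right power2_eq_square algebra_simps)
  also have "\<dots> = u \<bullet> (A *v u) - (u \<bullet> (A *v v))\<^sup>2 / (v \<bullet> (A *v v))"
    unfolding t_def using qv by (simp add: field_simps power2_eq_square)
  finally show ?thesis using qv by (simp add: field_simps)
qed

lemma psd_norm_bound:
  fixes A :: "real^'n^'n"
  assumes sym: "transpose A = A" and lo: "lo > 0"
    and b: "\<forall>v. lo * (v \<bullet> v) \<le> v \<bullet> (A *v v) \<and> v \<bullet> (A *v v) \<le> hi * (v \<bullet> v)"
  shows "(norm (A *v v))\<^sup>2 \<le> hi * (v \<bullet> (A *v v))" "(norm (A *v v))\<^sup>2 \<le> hi\<^sup>2 * (norm v)\<^sup>2"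
proof -
  define e :: "real^'n" where "e = axis undefined 1"
  have ee: "e \<bullet> e = 1" unfolding e_def by (simp add: inner_axis_axis)
  have hi: "hi \<ge> 0" proof - have "lo * (e \<bullet> e) \<le> hi * (e \<bullet> e)" using b by (meson order_trans) then show ?thesis using ee lo by simp qed
  have q: "\<forall>v. 0 \<le> v \<bullet> (A *v v)" using b lo by (smt (verit) inner_ge_zero mult_nonneg_nonneg)
  have eq: "(A *v v) \<bullet> (A *v (A *v v)) \<le> hi * (norm (A *v v))\<^sup>2"
    using b by (simp add: power2_norm_eq_inner)
  have cs: "((A *v v) \<bullet> (A *v v))\<^sup>2 \<le> ((A *v v) \<bullet> (A *v (A *v v))) * (v \<bullet> (A *v v))"
    using psd_cs[OF sym lo] b by blast
  have aa: "(A *v v) \<bullet> (A *v v) = (norm (A *v v))\<^sup>2" by (simp add: power2_norm_eq_inner)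
  have qq: "0 \<le> v \<bullet> (A *v v)" using q by blast
  have "((A *v v) \<bullet> (A *v (A *v v))) * (v \<bullet> (A *v v)) \<le> hi * (norm (A *v v))\<^sup>2 * (v \<bullet> (A *v v))"
    using eq qq by (rule mult_right_mono)
  with cs have c2: "((norm (A *v v))\<^sup>2)\<^sup>2 \<le> hi * (norm (A *v v))\<^sup>2 * (v \<bullet> (A *v v))"
    unfolding aa by linarith
  show 1: "(norm (A *v v))\<^sup>2 \<le> hi * (v \<bullet> (A *v v))"
  proof (cases "norm (A *v v) = 0")
    case True then show ?thesis using hi qq by simp
  next
    case False
    then have "(norm (A *v v))\<^sup>2 > 0" by simp
    moreover have "(norm (A *v v))\<^sup>2 * (norm (A *v v))\<^sup>2 \<le> (norm (A *v v))\<^sup>2 * (hi * (v \<bullet> (A *v v)))"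
      using c2 by (simp only: power2_eq_square[of "(norm (A *v v))\<^sup>2"] mult.assoc mult.left_commute[of hi])
    ultimately show ?thesis by (simp only: mult_le_cancel_left_pos)
  qed
  have "hi * (v \<bullet> (A *v v)) \<le> hi * (hi * (v \<bullet> v))" using b hi by (simp add: mult_left_mono)
  with 1 have "(norm (A *v v))\<^sup>2 \<le> hi * (hi * (v \<bullet> v))" by linarith
  moreover have "v \<bullet> v = (norm v)\<^sup>2" by (simp add: power2_norm_eq_inner)
  ultimately show "(norm (A *v v))\<^sup>2 \<le> hi\<^sup>2 * (norm v)\<^sup>2"
    by (simp only: power2_eq_square[of hi] mult.assoc)
qed


lemma line_deriv:
  fixes f :: "'a::real_inner \<Rightarrow> real"
  assumes fd: "\<And>y. (f has_derivative (\<lambda>h. gf y \<bullet> h)) (at y)"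
  shows "((\<lambda>t. f (x + t *\<^sub>R d)) has_real_derivative (gf (x + t *\<^sub>R d) \<bullet> d)) (at t)"
proof -
  have l: "((\<lambda>t. x + t *\<^sub>R d) has_derivative (\<lambda>h. h *\<^sub>R d)) (at t)"
    by (auto intro!: derivative_eq_intros)
  have "((\<lambda>t. f (x + t *\<^sub>R d)) has_derivative (\<lambda>h. gf (x + t *\<^sub>R d) \<bullet> (h *\<^sub>R d))) (at t)"
    using has_derivative_compose[OF l fd] by (simp add: o_def)
  then show ?thesis
    by (simp add: has_real_derivative_iff_has_vector_derivative has_vector_derivative_def mult.commute)
qed

lemma descent:
  fixes f :: "'a::real_inner \<Rightarrow> real"
  assumes fd: "\<And>y. (f has_derivative (\<lambda>h. gf y \<bullet> h)) (at y)"
    and Lip: "L-lipschitz_on UNIV gf"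
  shows "f y \<le> f x + gf x \<bullet> (y - x) + L / 2 * (norm (y - x))\<^sup>2"
proof -
  define d where "d = y - x"
  define \<phi> where "\<phi> t = f (x + t *\<^sub>R d) - t * (gf x \<bullet> d) - L / 2 * t\<^sup>2 * (norm d)\<^sup>2" for t
  have "\<phi> 1 \<le> \<phi> 0"
  proof (rule DERIV_nonpos_imp_nonincreasing[of 0 1 \<phi>])
    fix t :: real assume t: "0 \<le> t" "t \<le> 1"
    have D: "(\<phi> has_real_derivative (gf (x + t *\<^sub>R d) \<bullet> d - gf x \<bullet> d - L * t * (norm d)\<^sup>2)) (at t)"
      unfolding \<phi>_def
      by (rule derivative_eq_intros line_deriv[OF fd] refl | simp)+
    have "gf (x + t *\<^sub>R d) \<bullet> d - gf x \<bullet> d = (gf (x + t *\<^sub>R d) - gf x) \<bullet> d" by (simp add: inner_diff_left)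
    also have "\<dots> \<le> norm (gf (x + t *\<^sub>R d) - gf x) * norm d" by (rule norm_cauchy_schwarz)
    also have "\<dots> \<le> (L * norm (t *\<^sub>R d)) * norm d"
      using lipschitz_onD[OF Lip, of "x + t *\<^sub>R d" x] by (intro mult_right_mono) (auto simp: dist_norm)
    also have "\<dots> = L * t * (norm d)\<^sup>2" using t by (simp add: power2_eq_square)
    finally show "\<exists>y. (\<phi> has_real_derivative y) (at t) \<and> y \<le> 0" using D by (intro exI[of _ "gf (x + t *\<^sub>R d) \<bullet> d - gf x \<bullet> d - L * t * (norm d)\<^sup>2"]) auto
  qed simp
  then show ?thesis unfolding \<phi>_def d_def by simp
qed

lemma tangent:
  fixes f :: "'a::real_inner \<Rightarrow> real"
  assumes fd: "\<And>y. (f has_derivative (\<lambda>h. gf y \<bullet> h)) (at y)"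
    and cv: "convex_on UNIV f"
  shows "f z \<ge> f x + gf x \<bullet> (z - x)"
proof -
  define d where "d = z - x"
  define g where "g t = f (x + t *\<^sub>R d)" for t
  have "convex_on UNIV g"
  proof (rule convex_onI)
    fix t s u :: real assume "0 < t" "t < 1"
    have "g ((1 - t) *\<^sub>R s + t *\<^sub>R u) = f ((1 - t) *\<^sub>R (x + s *\<^sub>R d) + t *\<^sub>R (x + u *\<^sub>R d))"
      unfolding g_def by (simp add: algebra_simps)
    also have "\<dots> \<le> (1 - t) * g s + t * g u" unfolding g_def
      using convex_onD[OF cv, of t "x + s *\<^sub>R d" "x + u *\<^sub>R d"] \<open>0 < t\<close> \<open>t < 1\<close> by simp
    finally show "g ((1 - t) *\<^sub>R s + t *\<^sub>R u) \<le> (1 - t) * g s + t * g u" .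
  qed simp
  moreover have "(g has_real_derivative (gf x \<bullet> d)) (at 0 within UNIV)"
    unfolding g_def using line_deriv[OF fd, of x d 0] by simp
  ultimately have "g 1 - g 0 \<ge> (gf x \<bullet> d) * (1 - 0)"
    by (intro convex_on_imp_above_tangent[of UNIV]) auto
  then show ?thesis unfolding g_def d_def by simp
qed

lemma sc_bound:
  fixes f :: "'a::real_inner \<Rightarrow> real"
  assumes fd: "\<And>y. (f has_derivative (\<lambda>h. gf y \<bullet> h)) (at y)"
    and cv: "convex_on UNIV f" and mu: "\<mu> > 0"
  shows "\<mu> * (regf f x0 \<mu> x - f xs) - \<mu>\<^sup>2 / 2 * (norm (xs - x0))\<^sup>2 \<le> (norm (gf x + \<mu> *\<^sub>R (x - x0)))\<^sup>2 / 2"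
proof -
  define g where "g = gf x + \<mu> *\<^sub>R (x - x0)"
  define d where "d = xs - x"
  have t: "f xs \<ge> f x + gf x \<bullet> d" unfolding d_def by (rule tangent[OF fd cv])
  have n1: "(norm (xs - x0))\<^sup>2 = (norm (x - x0))\<^sup>2 + 2 * ((x - x0) \<bullet> d) + (norm d)\<^sup>2"
    unfolding d_def by (simp add: power2_norm_eq_inner inner_diff_left inner_diff_right inner_commute algebra_simps)
  have n2: "0 \<le> (norm (g + \<mu> *\<^sub>R d))\<^sup>2" by simp
  have n3: "(norm (g + \<mu> *\<^sub>R d))\<^sup>2 = (norm g)\<^sup>2 + 2 * \<mu> * (g \<bullet> d) + \<mu>\<^sup>2 * (norm d)\<^sup>2"
    unfolding power2_norm_eq_inner by (simp add: inner_add_left inner_add_right inner_commute algebra_simps power2_eq_square)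
  have gd: "g \<bullet> d = gf x \<bullet> d + \<mu> * ((x - x0) \<bullet> d)" unfolding g_def by (simp add: inner_add_left)
  have "\<mu> * (regf f x0 \<mu> x - f xs) - \<mu>\<^sup>2 / 2 * (norm (xs - x0))\<^sup>2
      \<le> \<mu> * (- (gf x \<bullet> d)) - \<mu>\<^sup>2 * ((x - x0) \<bullet> d) - \<mu>\<^sup>2 / 2 * (norm d)\<^sup>2"
  proof -
    have "\<mu> * (f x + gf x \<bullet> d) \<le> \<mu> * f xs" using t mu by (simp add: mult_left_mono)
    then show ?thesis unfolding regf_def n1 by (simp add: algebra_simps power2_eq_square)
  qed
  also have "\<dots> = - \<mu> * (g \<bullet> d) - \<mu>\<^sup>2 / 2 * (norm d)\<^sup>2" unfolding gd by (simp add: algebra_simps power2_eq_square)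
  also have "\<dots> \<le> (norm g)\<^sup>2 / 2" using n2 n3 by simp
  finally show ?thesis unfolding g_def .
qed

lemma one_step:
  fixes f :: "real^'n \<Rightarrow> real" and H :: "real^'n^'n"
  assumes fd: "\<And>y. (f has_derivative (\<lambda>h. gf y \<bullet> h)) (at y)"
    and Lip: "L-lipschitz_on UNIV gf" and cv: "convex_on UNIV f"
    and sym: "transpose H = H" and lo: "lo > 0"
    and hb: "\<forall>v. lo * (v \<bullet> v) \<le> v \<bullet> (H *v v) \<and> v \<bullet> (H *v v) \<le> hi * (v \<bullet> v)"
    and mu: "\<mu> > 0" and mu': "\<mu>' \<le> \<mu>" and mu0: "\<mu> \<le> \<mu>0"
    and gam: "\<gamma> > 0" and gb: "\<gamma> \<le> lo / (hi\<^sup>2 * (L + \<mu>0))" and hip: "hi > 0"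
    and g_def: "g = gf x + \<mu> *\<^sub>R (x - x0)"
    and xnew: "x' = x - \<gamma> *\<^sub>R (H *v (g - w))"
  shows "regf f x0 \<mu>' x' - f xs \<le> (1 - lo * \<mu> * \<gamma>) * (regf f x0 \<mu> x - f xs)
           + lo * (norm (xs - x0))\<^sup>2 / 2 * \<mu>\<^sup>2 * \<gamma>
           + (\<gamma> *\<^sub>R (H *v g) - ((L + \<mu>) * \<gamma>\<^sup>2 * hi\<^sup>2) *\<^sub>R g) \<bullet> w
           + (L + \<mu>) * hi\<^sup>2 / 2 * \<gamma>\<^sup>2 * (norm w)\<^sup>2"
proof -
  have L0: "L \<ge> 0" using Lip by (rule lipschitz_on_nonneg)
  define K where "K = (L + \<mu>) / 2 * \<gamma>\<^sup>2 * hi\<^sup>2"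
  define e where "e = x' - x"
  have e: "e = - \<gamma> *\<^sub>R (H *v (g - w))" unfolding e_def xnew by simp
  have r1: "regf f x0 \<mu>' x' \<le> regf f x0 \<mu> x'"
    unfolding regf_def using mu' by (simp add: mult_right_mono)
  have dsc: "f x' \<le> f x + gf x \<bullet> e + L / 2 * (norm e)\<^sup>2" unfolding e_def by (rule descent[OF fd Lip])
  have n1: "(norm (x' - x0))\<^sup>2 = (norm (x - x0))\<^sup>2 + 2 * ((x - x0) \<bullet> e) + (norm e)\<^sup>2"
    unfolding e_def power2_norm_eq_inner by (simp add: inner_diff_left inner_diff_right inner_commute algebra_simps)
  have ge: "g \<bullet> e = gf x \<bullet> e + \<mu> * ((x - x0) \<bullet> e)" unfolding g_def by (simp add: inner_add_left)
  have r2: "regf f x0 \<mu> x' \<le> regf f x0 \<mu> x + g \<bullet> e + (L + \<mu>) / 2 * (norm e)\<^sup>2"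
    using dsc unfolding regf_def n1 ge by (simp add: algebra_simps add_divide_distrib)
  have ge2: "g \<bullet> e = - \<gamma> * (g \<bullet> (H *v g)) + \<gamma> * ((H *v g) \<bullet> w)"
    unfolding e using mat_sym_inner[OF sym, of g w]
    by (simp add: matrix_vector_mult_diff_distrib inner_diff_right inner_commute algebra_simps)
  have ne: "(norm e)\<^sup>2 = \<gamma>\<^sup>2 * (norm (H *v (g - w)))\<^sup>2" unfolding e by (simp add: power_mult_distrib)
  have nb: "(norm (H *v (g - w)))\<^sup>2 \<le> hi\<^sup>2 * (norm (g - w))\<^sup>2" using psd_norm_bound(2)[OF sym lo hb] .
  have ngw: "(norm (g - w))\<^sup>2 = (norm g)\<^sup>2 - 2 * (g \<bullet> w) + (norm w)\<^sup>2"
    unfolding power2_norm_eq_inner by (simp add: inner_diff_left inner_diff_right inner_commute)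
  have Lm: "L + \<mu> \<ge> 0" using L0 mu by simp
  have r3: "(L + \<mu>) / 2 * (norm e)\<^sup>2 \<le> K * ((norm g)\<^sup>2 - 2 * (g \<bullet> w) + (norm w)\<^sup>2)"
  proof -
    have "(norm e)\<^sup>2 \<le> \<gamma>\<^sup>2 * (hi\<^sup>2 * (norm (g - w))\<^sup>2)" unfolding ne using nb by (simp add: mult_left_mono)
    then have "(L + \<mu>) / 2 * (norm e)\<^sup>2 \<le> (L + \<mu>) / 2 * (\<gamma>\<^sup>2 * (hi\<^sup>2 * (norm (g - w))\<^sup>2))"
      using Lm by (simp add: mult_left_mono)
    moreover have "(L + \<mu>) / 2 * (\<gamma>\<^sup>2 * (hi\<^sup>2 * (norm (g - w))\<^sup>2)) = K * (norm (g - w))\<^sup>2"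
      unfolding K_def by (simp add: algebra_simps)
    ultimately have "(L + \<mu>) / 2 * (norm e)\<^sup>2 \<le> K * (norm (g - w))\<^sup>2" by linarith
    then show ?thesis by (simp only: ngw)
  qed
  have gHg: "lo * (norm g)\<^sup>2 \<le> g \<bullet> (H *v g)" using hb by (simp add: power2_norm_eq_inner)
  have Kb: "2 * K \<le> lo * \<gamma>"
  proof -
    have p: "hi\<^sup>2 * (L + \<mu>0) > 0" using hip L0 mu mu0 by simp
    have "\<gamma> * (hi\<^sup>2 * (L + \<mu>0)) \<le> lo" using gb p by (simp add: pos_le_divide_eq)
    moreover have "\<gamma> * (hi\<^sup>2 * (L + \<mu>)) \<le> \<gamma> * (hi\<^sup>2 * (L + \<mu>0))" using gam mu0 by (simp add: mult_left_mono)
    ultimately have "\<gamma> * (hi\<^sup>2 * (L + \<mu>)) \<le> lo" by linarith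
    then have "\<gamma> * (\<gamma> * (hi\<^sup>2 * (L + \<mu>))) \<le> \<gamma> * lo" using gam by (simp add: mult_left_mono)
    then show ?thesis unfolding K_def by (simp add: algebra_simps power2_eq_square)
  qed
  have t1: "- \<gamma> * (g \<bullet> (H *v g)) + K * (norm g)\<^sup>2 \<le> - (lo * \<gamma> / 2) * (norm g)\<^sup>2"
  proof -
    have "\<gamma> * (lo * (norm g)\<^sup>2) \<le> \<gamma> * (g \<bullet> (H *v g))" using gHg gam by (simp add: mult_left_mono)
    moreover have "2 * K * (norm g)\<^sup>2 \<le> lo * \<gamma> * (norm g)\<^sup>2" using Kb by (simp add: mult_right_mono)
    ultimately show ?thesis by (simp add: algebra_simps)
  qed
  have sc: "\<mu> * (regf f x0 \<mu> x - f xs) - \<mu>\<^sup>2 / 2 * (norm (xs - x0))\<^sup>2 \<le> (norm g)\<^sup>2 / 2"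
    unfolding g_def by (rule sc_bound[OF fd cv mu])
  have t2: "- (lo * \<gamma> / 2) * (norm g)\<^sup>2 \<le> - (lo * \<gamma> * (\<mu> * (regf f x0 \<mu> x - f xs) - \<mu>\<^sup>2 / 2 * (norm (xs - x0))\<^sup>2))"
  proof -
    have "(lo * \<gamma>) * (\<mu> * (regf f x0 \<mu> x - f xs) - \<mu>\<^sup>2 / 2 * (norm (xs - x0))\<^sup>2) \<le> (lo * \<gamma>) * ((norm g)\<^sup>2 / 2)"
      using sc lo gam by (intro mult_left_mono) auto
    then show ?thesis by simp
  qed
  have cw: "(\<gamma> *\<^sub>R (H *v g) - ((L + \<mu>) * \<gamma>\<^sup>2 * hi\<^sup>2) *\<^sub>R g) \<bullet> w = \<gamma> * ((H *v g) \<bullet> w) - 2 * K * (g \<bullet> w)"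
    unfolding K_def by (simp add: inner_diff_left)
  have "regf f x0 \<mu>' x' \<le> regf f x0 \<mu> x - \<gamma> * (g \<bullet> (H *v g)) + \<gamma> * ((H *v g) \<bullet> w) + K * ((norm g)\<^sup>2 - 2 * (g \<bullet> w) + (norm w)\<^sup>2)"
    using r1 r2 r3 ge2 by linarith
  moreover have "K * ((norm g)\<^sup>2 - 2 * (g \<bullet> w) + (norm w)\<^sup>2) = K * (norm g)\<^sup>2 - 2 * K * (g \<bullet> w) + K * (norm w)\<^sup>2"
    by (simp add: algebra_simps)
  moreover have "(L + \<mu>) * hi\<^sup>2 / 2 * \<gamma>\<^sup>2 * (norm w)\<^sup>2 = K * (norm w)\<^sup>2" by (simp add: K_def algebra_simps)
  moreover have "(1 - lo * \<mu> * \<gamma>) * (regf f x0 \<mu> x - f xs) + lo * (norm (xs - x0))\<^sup>2 / 2 * \<mu>\<^sup>2 * \<gamma>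
     = (regf f x0 \<mu> x - f xs) - (lo * \<gamma> * (\<mu> * (regf f x0 \<mu> x - f xs) - \<mu>\<^sup>2 / 2 * (norm (xs - x0))\<^sup>2))"
    by (simp add: algebra_simps)
  ultimately show ?thesis using t1 t2 cw by linarith
qed


lemma cont_mv: "continuous_on UNIV (\<lambda>p::(real^'n^'m) \<times> (real^'n). fst p *v snd p)"
  unfolding matrix_vector_mult_def
  by (intro continuous_intros continuous_on_vec_lambda) 

lemma meas_mv:
  fixes A :: "'a \<Rightarrow> real^'n^'m" and v :: "'a \<Rightarrow> real^'n"
  assumes "A \<in> borel_measurable N" "v \<in> borel_measurable N"
  shows "(\<lambda>\<omega>. A \<omega> *v v \<omega>) \<in> borel_measurable N"
  using borel_measurable_continuous_Pair[OF assms cont_mv] by simp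

lemma meas_nth:
  fixes v :: "'a \<Rightarrow> real^'n"
  assumes "v \<in> borel_measurable N"
  shows "(\<lambda>\<omega>. v \<omega> $ i) \<in> borel_measurable N"
  using measurable_compose[OF assms borel_measurable_nth] by simp


lemma sq3: "((u::real) + v + w)\<^sup>2 \<le> 3 * (u\<^sup>2 + v\<^sup>2 + w\<^sup>2)"
proof -
  have "0 \<le> (u - v)\<^sup>2 + (v - w)\<^sup>2 + (u - w)\<^sup>2" by simp
  then show ?thesis by (simp add: power2_eq_square algebra_simps)
qed

lemma int_sq_bound:
  fixes u :: "'a \<Rightarrow> 'b::{banach, second_countable_topology}"
    and z1 :: "'a \<Rightarrow> 'c::{banach, second_countable_topology}"
    and z2 :: "'a \<Rightarrow> 'd::{banach, second_countable_topology}"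
  assumes fm: "finite_measure M" and um: "u \<in> borel_measurable M"
    and i1: "integrable M (\<lambda>\<omega>. (norm (z1 \<omega>))\<^sup>2)" and i2: "integrable M (\<lambda>\<omega>. (norm (z2 \<omega>))\<^sup>2)"
    and ab: "a \<ge> 0" "b \<ge> 0" "c \<ge> 0"
    and bd: "AE \<omega> in M. norm (u \<omega>) \<le> a + b * norm (z1 \<omega>) + c * norm (z2 \<omega>)"
  shows "integrable M (\<lambda>\<omega>. (norm (u \<omega>))\<^sup>2)"
proof (rule Bochner_Integration.integrable_bound)
  show "integrable M (\<lambda>\<omega>. 3 * (a\<^sup>2 + b\<^sup>2 * (norm (z1 \<omega>))\<^sup>2 + c\<^sup>2 * (norm (z2 \<omega>))\<^sup>2))"
    using i1 i2 finite_measure.integrable_const[OF fm] by (intro integrable_mult_right Bochner_Integration.integrable_add) auto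
  show "(\<lambda>\<omega>. (norm (u \<omega>))\<^sup>2) \<in> borel_measurable M" using um by measurable
  show "AE \<omega> in M. norm ((norm (u \<omega>))\<^sup>2) \<le> norm (3 * (a\<^sup>2 + b\<^sup>2 * (norm (z1 \<omega>))\<^sup>2 + c\<^sup>2 * (norm (z2 \<omega>))\<^sup>2))"
    using bd
  proof eventually_elim
    case (elim \<omega>)
    have "(norm (u \<omega>))\<^sup>2 \<le> (a + b * norm (z1 \<omega>) + c * norm (z2 \<omega>))\<^sup>2"
      using elim by (intro power_mono) auto
    also have "\<dots> \<le> 3 * (a\<^sup>2 + b\<^sup>2 * (norm (z1 \<omega>))\<^sup>2 + c\<^sup>2 * (norm (z2 \<omega>))\<^sup>2)"
      using sq3[of a "b * norm (z1 \<omega>)" "c * norm (z2 \<omega>)"] by (simp add: power_mult_distrib)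
    finally show ?case by simp
  qed
qed

lemma int_prod:
  fixes u v :: "'a \<Rightarrow> real"
  assumes "u \<in> borel_measurable M" "v \<in> borel_measurable M"
    and "integrable M (\<lambda>\<omega>. (u \<omega>)\<^sup>2)" "integrable M (\<lambda>\<omega>. (v \<omega>)\<^sup>2)"
  shows "integrable M (\<lambda>\<omega>. u \<omega> * v \<omega>)"
proof (rule Bochner_Integration.integrable_bound)
  show "integrable M (\<lambda>\<omega>. (u \<omega>)\<^sup>2 + (v \<omega>)\<^sup>2)" using assms by auto
  show "(\<lambda>\<omega>. u \<omega> * v \<omega>) \<in> borel_measurable M" using assms by measurable
  show "AE \<omega> in M. norm (u \<omega> * v \<omega>) \<le> norm ((u \<omega>)\<^sup>2 + (v \<omega>)\<^sup>2)"
  proof (rule AE_I2)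
    fix \<omega>
    have "0 \<le> (\<bar>u \<omega>\<bar> - \<bar>v \<omega>\<bar>)\<^sup>2" by simp
    then have "2 * (\<bar>u \<omega>\<bar> * \<bar>v \<omega>\<bar>) \<le> (u \<omega>)\<^sup>2 + (v \<omega>)\<^sup>2" by (simp add: power2_eq_square algebra_simps)
    moreover have "0 \<le> \<bar>u \<omega>\<bar> * \<bar>v \<omega>\<bar>" by simp
    ultimately have "\<bar>u \<omega>\<bar> * \<bar>v \<omega>\<bar> \<le> (u \<omega>)\<^sup>2 + (v \<omega>)\<^sup>2" by linarith
    then show "norm (u \<omega> * v \<omega>) \<le> norm ((u \<omega>)\<^sup>2 + (v \<omega>)\<^sup>2)" by (simp add: abs_mult)
  qed
qed

lemma int_nth_sq:
  fixes v :: "'a \<Rightarrow> real^'n"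
  assumes "v \<in> borel_measurable M" "integrable M (\<lambda>\<omega>. (norm (v \<omega>))\<^sup>2)"
  shows "integrable M (\<lambda>\<omega>. (v \<omega> $ i)\<^sup>2)"
proof (rule Bochner_Integration.integrable_bound[OF assms(2)])
  show "(\<lambda>\<omega>. (v \<omega> $ i)\<^sup>2) \<in> borel_measurable M" using meas_nth[OF assms(1)] by measurable
  show "AE \<omega> in M. norm ((v \<omega> $ i)\<^sup>2) \<le> norm ((norm (v \<omega>))\<^sup>2)"
  proof (intro AE_I2)
    fix \<omega>
    have "\<bar>v \<omega> $ i\<bar>\<^sup>2 \<le> (norm (v \<omega>))\<^sup>2" using component_le_norm_cart[of "v \<omega>" i] by (intro power_mono) auto
    then show "norm ((v \<omega> $ i)\<^sup>2) \<le> norm ((norm (v \<omega>))\<^sup>2)" by simp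
  qed
qed


theorem mainTheorem9:
  fixes M :: "'w measure"
    and Fil :: "nat \<Rightarrow> 'w measure"
    and P :: "'s measure"
    and F :: "real^'n \<Rightarrow> 's \<Rightarrow> real"
    and gF :: "real^'n \<Rightarrow> 's \<Rightarrow> real^'n"
    and f :: "real^'n \<Rightarrow> real"
    and gf :: "real^'n \<Rightarrow> real^'n"
    and L \<nu>1 \<nu>2 lam_lo :: real
    and lam_hi \<gamma> \<mu> :: "nat \<Rightarrow> real"
    and N :: "nat \<Rightarrow> nat"
    and \<xi> :: "nat \<Rightarrow> nat \<Rightarrow> 'w \<Rightarrow> 's"
    and x :: "nat \<Rightarrow> 'w \<Rightarrow> real^'n"
    and H :: "nat \<Rightarrow> 'w \<Rightarrow> real^'n^'n"
    and x0 :: "real^'n"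
    and wbar :: "nat \<Rightarrow> 'w \<Rightarrow> real^'n"
  assumes M: "prob_space M"
    and P: "prob_space P"
    and Fil_sub: "\<And>k. subalgebra M (Fil k)"
    and Fil_mono: "\<And>k. sets (Fil k) \<subseteq> sets (Fil (Suc k))"
    and F_int: "\<And>y. integrable P (F y)"
    and f_def: "\<And>y. f y = (\<integral>\<omega>. F y \<omega> \<partial>P)"
    and Xstar_ne: "solset f \<noteq> {}"
    and F_convex: "\<And>\<omega>. convex_on UNIV (\<lambda>y. F y \<omega>)"
    and F_grad: "\<And>\<omega> y. ((\<lambda>z. F z \<omega>) has_derivative (\<lambda>h. gF y \<omega> \<bullet> h)) (at y)"
    and F_C1: "\<And>\<omega>. continuous_on UNIV (\<lambda>y. gF y \<omega>)"
    and f_grad: "\<And>y. (f has_derivative (\<lambda>h. gf y \<bullet> h)) (at y)"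
    and f_C1: "continuous_on UNIV gf"
    and f_Lip: "L-lipschitz_on UNIV gf"
    and N_pos: "\<And>k. N k > 0"
    and \<xi>_meas: "\<And>j k. \<xi> j k \<in> measurable M P"
    and x_init: "\<And>\<omega>. x 0 \<omega> = x0"
    and x_adapted: "\<And>k. x k \<in> borel_measurable (Fil k)"
    and wbar_def: "\<And>k \<omega>. wbar k \<omega> =
          gf (x k \<omega>) - (1 / real (N k)) *\<^sub>R (\<Sum>j\<in>{1..N k}. gF (x k \<omega>) (\<xi> j k \<omega>))"
    and \<nu>_pos: "\<nu>1 > 0" "\<nu>2 > 0"
    and wbar_int: "\<And>k. integrable M (wbar k)"
    and wbar_sq_int: "\<And>k. integrable M (\<lambda>\<omega>. (norm (wbar k \<omega>))\<^sup>2)"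
    and wbar_var: "\<And>k. AE \<omega> in M. real_cond_exp M (Fil k) (\<lambda>\<omega>. (norm (wbar k \<omega>))\<^sup>2) \<omega>
                       \<le> (\<nu>1\<^sup>2 * (norm (x k \<omega>))\<^sup>2 + \<nu>2\<^sup>2) / real (N k)"
    and wbar_unbiased: "\<And>k i. AE \<omega> in M. real_cond_exp M (Fil k) (\<lambda>\<omega>. wbar k \<omega> $ i) \<omega> = 0"
    and H_adapted: "\<And>k. H k \<in> borel_measurable (Fil k)"
    and H_sym: "\<And>k. AE \<omega> in M. transpose (H k \<omega>) = H k \<omega>"
    and H_pd: "\<And>k. AE \<omega> in M. \<forall>v. v \<noteq> 0 \<longrightarrow> v \<bullet> (H k \<omega> *v v) > 0"
    and H_bounds: "\<And>k. AE \<omega> in M. \<forall>v. lam_lo * (v \<bullet> v) \<le> v \<bullet> (H k \<omega> *v v)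
                                        \<and> v \<bullet> (H k \<omega> *v v) \<le> lam_hi k * (v \<bullet> v)"
    and lam_lo_pos: "lam_lo > 0"
    and lam_hi_pos: "\<And>k. lam_hi k > 0"
    and QG: "\<exists>\<alpha>>0. \<forall>y. f y \<ge> optval f + \<alpha> / 2 * (infdist y (solset f))\<^sup>2"
    and x_rec: "\<And>k \<omega>. x (Suc k) \<omega> = x k \<omega> - \<gamma> k *\<^sub>R (H k \<omega> *v
          ((1 / real (N k)) *\<^sub>R (\<Sum>j\<in>{1..N k}. gF (x k \<omega>) (\<xi> j k \<omega>) + \<mu> k *\<^sub>R (x k \<omega> - x0))))"
    and \<mu>_pos: "\<And>k. \<mu> k > 0"
    and \<mu>_noninc: "decseq \<mu>"
    and \<gamma>_pos: "\<And>k. \<gamma> k > 0"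
    and \<gamma>_bound: "\<And>k. \<gamma> k \<le> lam_lo / ((lam_hi k)\<^sup>2 * (L + \<mu> 0))"
    and f_x_int: "\<And>k. integrable M (\<lambda>\<omega>. f (x k \<omega>))"
  shows "\<forall>k. AE \<omega> in M.
           real_cond_exp M (Fil k) (\<lambda>\<omega>. regf f x0 (\<mu> (Suc k)) (x (Suc k) \<omega>)) \<omega> - optval f
         \<le> (1 - lam_lo * \<mu> k * \<gamma> k) * (regf f x0 (\<mu> k) (x k \<omega>) - optval f)
           + lam_lo * (infdist x0 (solset f))\<^sup>2 / 2 * (\<mu> k)\<^sup>2 * \<gamma> k
           + (L + \<mu> k) * (lam_hi k)\<^sup>2 * (\<nu>1\<^sup>2 * (norm (x k \<omega>))\<^sup>2 + \<nu>2\<^sup>2) / (2 * real (N k)) * (\<gamma> k)\<^sup>2"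
proof
  fix k
  have L0: "L \<ge> 0" using f_Lip by (rule lipschitz_on_nonneg)
  have fcont: "continuous_on UNIV f"
    using f_grad by (meson continuous_at_imp_continuous_on has_derivative_continuous)
  have cvx: "convex_on UNIV f"
  proof (rule convex_onI)
    fix t u v :: real and y z :: "real^'n" assume t: "0 < t" "t < 1"
    have "f ((1 - t) *\<^sub>R y + t *\<^sub>R z) = (\<integral>\<omega>. F ((1 - t) *\<^sub>R y + t *\<^sub>R z) \<omega> \<partial>P)" by (rule f_def)
    also have "\<dots> \<le> (\<integral>\<omega>. (1 - t) * F y \<omega> + t * F z \<omega> \<partial>P)"
      using F_int convex_onD[OF F_convex, of t y z] t by (intro integral_mono) auto
    also have "\<dots> = (1 - t) * f y + t * f z" using F_int by (simp add: f_def)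
    finally show "f ((1 - t) *\<^sub>R y + t *\<^sub>R z) \<le> (1 - t) * f y + t * f z" .
  qed simp
  obtain x1 where x1: "x1 \<in> solset f" using Xstar_ne by blast
  have sol_eq: "solset f = {y. f y \<le> f x1}" using x1 unfolding solset_def by (auto intro: order_trans)
  have sol_closed: "closed (solset f)" unfolding sol_eq
    by (rule closed_Collect_le) (auto intro: fcont continuous_on_const)
  obtain xs where xs: "xs \<in> solset f" and xsmin: "\<And>y. y \<in> solset f \<Longrightarrow> dist x0 xs \<le> dist x0 y"
    using distance_attains_inf[OF sol_closed Xstar_ne] by blast
  have fs: "optval f = f xs"
    unfolding optval_def using xs unfolding solset_def by (intro cInf_eq_minimum) auto
  have dd: "infdist x0 (solset f) = norm (xs - x0)"
  proof (rule antisym)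
    show "infdist x0 (solset f) \<le> norm (xs - x0)" using infdist_le[OF xs, of x0] by (simp add: dist_norm norm_minus_commute)
    show "norm (xs - x0) \<le> infdist x0 (solset f)" unfolding infdist_def using Xstar_ne xsmin
      by (auto intro!: cINF_greatest simp: dist_norm norm_minus_commute)
  qed
  have xM: "x j \<in> borel_measurable M" for j using measurable_from_subalg[OF Fil_sub x_adapted] .
  have HM: "H j \<in> borel_measurable M" for j using measurable_from_subalg[OF Fil_sub H_adapted] .
  have wM: "wbar j \<in> borel_measurable M" for j using wbar_int by (rule borel_measurable_integrable)
  define g where "g j \<omega> = gf (x j \<omega>) + \<mu> j *\<^sub>R (x j \<omega> - x0)" for j \<omega>
  have gF: "g j \<in> borel_measurable (Fil j)" for j
  proof -
    have [measurable]: "(\<lambda>\<omega>. gf (x j \<omega>)) \<in> borel_measurable (Fil j)"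
      by (rule borel_measurable_continuous_on[OF f_C1 x_adapted])
    have [measurable]: "x j \<in> borel_measurable (Fil j)" by (rule x_adapted)
    show ?thesis unfolding g_def[abs_def] by measurable
  qed
  have gM: "g j \<in> borel_measurable M" for j using measurable_from_subalg[OF Fil_sub gF] .
  have xrec': "x (Suc j) \<omega> = x j \<omega> - \<gamma> j *\<^sub>R (H j \<omega> *v (g j \<omega> - wbar j \<omega>))" for j \<omega>
  proof -
    have "(\<Sum>i\<in>{1..N j}. gF (x j \<omega>) (\<xi> i j \<omega>) + \<mu> j *\<^sub>R (x j \<omega> - x0))
        = (\<Sum>i\<in>{1..N j}. gF (x j \<omega>) (\<xi> i j \<omega>)) + real (N j) *\<^sub>R (\<mu> j *\<^sub>R (x j \<omega> - x0))"
      by (simp add: sum.distrib sum_constant_scaleR del: sum_constant)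
    then have "(1 / real (N j)) *\<^sub>R (\<Sum>i\<in>{1..N j}. gF (x j \<omega>) (\<xi> i j \<omega>) + \<mu> j *\<^sub>R (x j \<omega> - x0))
        = (1 / real (N j)) *\<^sub>R (\<Sum>i\<in>{1..N j}. gF (x j \<omega>) (\<xi> i j \<omega>)) + \<mu> j *\<^sub>R (x j \<omega> - x0)"
      using N_pos[of j] by (simp add: scaleR_add_right)
    also have "\<dots> = g j \<omega> - wbar j \<omega>" unfolding g_def wbar_def by simp
    finally show ?thesis using x_rec by simp
  qed
  have HA: "AE \<omega> in M. transpose (H j \<omega>) = H j \<omega> \<and> (\<forall>v. lam_lo * (v \<bullet> v) \<le> v \<bullet> (H j \<omega> *v v)
                                        \<and> v \<bullet> (H j \<omega> *v v) \<le> lam_hi j * (v \<bullet> v))" for j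
    using H_sym[of j] H_bounds[of j] by eventually_elim auto
  have Hnorm: "norm (A *v v) \<le> lam_hi j * norm v"
    if "transpose A = A" "\<forall>v. lam_lo * (v \<bullet> v) \<le> v \<bullet> (A *v v) \<and> v \<bullet> (A *v v) \<le> lam_hi j * (v \<bullet> v)"
    for A :: "real^'n^'n" and v j
  proof -
    have "(norm (A *v v))\<^sup>2 \<le> (lam_hi j * norm v)\<^sup>2"
      using psd_norm_bound(2)[OF that(1) lam_lo_pos that(2)] by (simp add: power_mult_distrib)
    moreover have "0 \<le> lam_hi j * norm v" using lam_hi_pos[of j] by simp
    ultimately show ?thesis by (rule power2_le_imp_le)
  qed
  have gnorm: "norm (g j \<omega>) \<le> norm (gf x0) + (L + \<mu> j) * norm (x j \<omega> - x0)" for j \<omega>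
  proof -
    have "norm (gf (x j \<omega>) - gf x0) \<le> L * norm (x j \<omega> - x0)"
      using lipschitz_onD[OF f_Lip, of "x j \<omega>" x0] by (simp add: dist_norm)
    then have "norm (gf (x j \<omega>)) \<le> norm (gf x0) + L * norm (x j \<omega> - x0)"
      using norm_triangle_sub[of "gf (x j \<omega>)" "gf x0"] by linarith
    moreover have "norm (\<mu> j *\<^sub>R (x j \<omega> - x0)) = \<mu> j * norm (x j \<omega> - x0)" using \<mu>_pos[of j] by simp
    ultimately show ?thesis unfolding g_def using norm_triangle_ineq[of "gf (x j \<omega>)" "\<mu> j *\<^sub>R (x j \<omega> - x0)"]
      by (simp add: algebra_simps)
  qed
  have fm: "finite_measure M" using M by (simp add: prob_space.finite_measure)
  have SQ: "integrable M (\<lambda>\<omega>. (norm (x j \<omega> - x0))\<^sup>2)" for j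
  proof (induction j)
    case 0 then show ?case by (simp add: x_init)
  next
    case (Suc j)
    let ?a = "\<gamma> j * lam_hi j * norm (gf x0)" and ?b = "1 + \<gamma> j * lam_hi j * (L + \<mu> j)" and ?c = "\<gamma> j * lam_hi j"
    have pos: "\<gamma> j > 0" "lam_hi j > 0" "\<mu> j > 0" using \<gamma>_pos lam_hi_pos \<mu>_pos by auto
    show ?case
    proof (rule int_sq_bound[OF fm _ Suc wbar_sq_int, of _ ?a ?b ?c])
      show "(\<lambda>\<omega>. x (Suc j) \<omega> - x0) \<in> borel_measurable M" using xM by measurable
      show "?a \<ge> 0" "?b \<ge> 0" "?c \<ge> 0" using pos L0 by auto
      show "AE \<omega> in M. norm (x (Suc j) \<omega> - x0) \<le> ?a + ?b * norm (x j \<omega> - x0) + ?c * norm (wbar j \<omega>)"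
        using HA[of j]
      proof eventually_elim
        case (elim \<omega>)
        have h: "norm (H j \<omega> *v (g j \<omega> - wbar j \<omega>)) \<le> lam_hi j * norm (g j \<omega> - wbar j \<omega>)"
          using Hnorm elim by blast
        have "norm (g j \<omega> - wbar j \<omega>) \<le> norm (g j \<omega>) + norm (wbar j \<omega>)" by (rule norm_triangle_ineq4)
        then have "lam_hi j * norm (g j \<omega> - wbar j \<omega>) \<le> lam_hi j * (norm (gf x0) + (L + \<mu> j) * norm (x j \<omega> - x0) + norm (wbar j \<omega>))"
          using gnorm[of j \<omega>] pos by (intro mult_left_mono) auto
        with h have "norm (H j \<omega> *v (g j \<omega> - wbar j \<omega>)) \<le> lam_hi j * (norm (gf x0) + (L + \<mu> j) * norm (x j \<omega> - x0) + norm (wbar j \<omega>))"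
          by linarith
        then have h2: "\<gamma> j * norm (H j \<omega> *v (g j \<omega> - wbar j \<omega>)) \<le> \<gamma> j * (lam_hi j * (norm (gf x0) + (L + \<mu> j) * norm (x j \<omega> - x0) + norm (wbar j \<omega>)))"
          using pos by (intro mult_left_mono) auto
        have "x (Suc j) \<omega> - x0 = (x j \<omega> - x0) - \<gamma> j *\<^sub>R (H j \<omega> *v (g j \<omega> - wbar j \<omega>))"
          by (simp add: xrec')
        then have "norm (x (Suc j) \<omega> - x0) \<le> norm (x j \<omega> - x0) + norm (\<gamma> j *\<^sub>R (H j \<omega> *v (g j \<omega> - wbar j \<omega>)))"
          by (metis norm_triangle_ineq4)
        also have "norm (\<gamma> j *\<^sub>R (H j \<omega> *v (g j \<omega> - wbar j \<omega>))) = \<gamma> j * norm (H j \<omega> *v (g j \<omega> - wbar j \<omega>))"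
          using pos by simp
        finally have "norm (x (Suc j) \<omega> - x0) \<le> norm (x j \<omega> - x0) + \<gamma> j * norm (H j \<omega> *v (g j \<omega> - wbar j \<omega>))" .
        with h2 show ?case by (simp add: algebra_simps)
      qed
    qed
  qed
  show "AE \<omega> in M.
           real_cond_exp M (Fil k) (\<lambda>\<omega>. regf f x0 (\<mu> (Suc k)) (x (Suc k) \<omega>)) \<omega> - optval f
         \<le> (1 - lam_lo * \<mu> k * \<gamma> k) * (regf f x0 (\<mu> k) (x k \<omega>) - optval f)
           + lam_lo * (infdist x0 (solset f))\<^sup>2 / 2 * (\<mu> k)\<^sup>2 * \<gamma> k
           + (L + \<mu> k) * (lam_hi k)\<^sup>2 * (\<nu>1\<^sup>2 * (norm (x k \<omega>))\<^sup>2 + \<nu>2\<^sup>2) / (2 * real (N k)) * (\<gamma> k)\<^sup>2"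
  proof -
    interpret Mp: prob_space M by (rule M)
    interpret S: sigma_finite_subalgebra M "Fil k"
      by (rule finite_measure_subalgebra_is_sigma_finite)
         (simp add: finite_measure_subalgebra_def finite_measure_subalgebra_axioms_def Fil_sub Mp.finite_measure_axioms)
    define dd where "dd = norm (xs - x0)"
    define K where "K = (L + \<mu> k) * (lam_hi k)\<^sup>2 / 2 * (\<gamma> k)\<^sup>2"
    define c where "c \<omega> = \<gamma> k *\<^sub>R (H k \<omega> *v g k \<omega>) - ((L + \<mu> k) * (\<gamma> k)\<^sup>2 * (lam_hi k)\<^sup>2) *\<^sub>R g k \<omega>" for \<omega>
    define A where "A \<omega> = f xs + (1 - lam_lo * \<mu> k * \<gamma> k) * (regf f x0 (\<mu> k) (x k \<omega>) - f xs) + lam_lo * dd\<^sup>2 / 2 * (\<mu> k)\<^sup>2 * \<gamma> k" for \<omega>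
    define T where "T \<omega> = regf f x0 (\<mu> (Suc k)) (x (Suc k) \<omega>)" for \<omega>
    define S where "S \<omega> = (\<Sum>i\<in>UNIV. c \<omega> $ i * wbar k \<omega> $ i)" for \<omega>
    define Q where "Q \<omega> = K * (norm (wbar k \<omega>))\<^sup>2" for \<omega>
    have K0: "K \<ge> 0" unfolding K_def using L0 \<mu>_pos[of k] by simp
    have TR: "AE \<omega> in M. T \<omega> \<le> A \<omega> + S \<omega> + Q \<omega>"
      using HA[of k]
    proof eventually_elim
      case (elim \<omega>)
      have mu1: "\<mu> (Suc k) \<le> \<mu> k" using \<mu>_noninc by (simp add: decseq_Suc_iff)
      have mu0: "\<mu> k \<le> \<mu> 0" using \<mu>_noninc by (simp add: decseq_def)
      have s: "transpose (H k \<omega>) = H k \<omega>" using elim by blast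
      have hb: "\<forall>v. lam_lo * (v \<bullet> v) \<le> v \<bullet> (H k \<omega> *v v) \<and> v \<bullet> (H k \<omega> *v v) \<le> lam_hi k * (v \<bullet> v)" using elim by blast
      have "regf f x0 (\<mu> (Suc k)) (x (Suc k) \<omega>) - f xs \<le> (1 - lam_lo * \<mu> k * \<gamma> k) * (regf f x0 (\<mu> k) (x k \<omega>) - f xs)
           + lam_lo * (norm (xs - x0))\<^sup>2 / 2 * (\<mu> k)\<^sup>2 * \<gamma> k
           + (\<gamma> k *\<^sub>R (H k \<omega> *v g k \<omega>) - ((L + \<mu> k) * (\<gamma> k)\<^sup>2 * (lam_hi k)\<^sup>2) *\<^sub>R g k \<omega>) \<bullet> wbar k \<omega>
           + (L + \<mu> k) * (lam_hi k)\<^sup>2 / 2 * (\<gamma> k)\<^sup>2 * (norm (wbar k \<omega>))\<^sup>2"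
        using one_step[OF f_grad f_Lip cvx s lam_lo_pos hb \<mu>_pos mu1 mu0 \<gamma>_pos \<gamma>_bound lam_hi_pos g_def xrec'] .
      moreover have "(\<gamma> k *\<^sub>R (H k \<omega> *v g k \<omega>) - ((L + \<mu> k) * (\<gamma> k)\<^sup>2 * (lam_hi k)\<^sup>2) *\<^sub>R g k \<omega>) \<bullet> wbar k \<omega> = S \<omega>"
        unfolding S_def inner_vec_def c_def by simp
      moreover have "T \<omega> = regf f x0 (\<mu> (Suc k)) (x (Suc k) \<omega>)" by (simp add: T_def)
      moreover have "A \<omega> = f xs + (1 - lam_lo * \<mu> k * \<gamma> k) * (regf f x0 (\<mu> k) (x k \<omega>) - f xs) + lam_lo * (norm (xs - x0))\<^sup>2 / 2 * (\<mu> k)\<^sup>2 * \<gamma> k"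
        by (simp add: A_def dd_def)
      moreover have "Q \<omega> = (L + \<mu> k) * (lam_hi k)\<^sup>2 / 2 * (\<gamma> k)\<^sup>2 * (norm (wbar k \<omega>))\<^sup>2" by (simp add: Q_def K_def)
      ultimately show ?case by linarith
    qed
    have xF[measurable]: "x k \<in> borel_measurable (Fil k)" by (rule x_adapted)
    have HF[measurable]: "H k \<in> borel_measurable (Fil k)" by (rule H_adapted)
    have gFk[measurable]: "g k \<in> borel_measurable (Fil k)" by (rule gF)
    have fxF[measurable]: "(\<lambda>\<omega>. f (x k \<omega>)) \<in> borel_measurable (Fil k)"
      by (rule borel_measurable_continuous_on[OF fcont x_adapted])
    have fxsM: "(\<lambda>\<omega>. f (x (Suc k) \<omega>)) \<in> borel_measurable M"
      by (rule borel_measurable_continuous_on[OF fcont xM])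
    have HgF[measurable]: "(\<lambda>\<omega>. H k \<omega> *v g k \<omega>) \<in> borel_measurable (Fil k)"
      by (rule meas_mv[OF HF gFk])
    have cF[measurable]: "c \<in> borel_measurable (Fil k)" unfolding c_def[abs_def] by measurable
    have cM: "c \<in> borel_measurable M" using measurable_from_subalg[OF Fil_sub cF] .
    have AF: "A \<in> borel_measurable (Fil k)" unfolding A_def[abs_def] regf_def by measurable
    have iT: "integrable M T" unfolding T_def[abs_def] regf_def
      using f_x_int[of "Suc k"] SQ[of "Suc k"] by auto
    have iA: "integrable M A" unfolding A_def[abs_def] regf_def
      using f_x_int[of k] SQ[of k] by auto
    have iQ: "integrable M Q" unfolding Q_def[abs_def] using wbar_sq_int[of k] by auto
    have c2: "integrable M (\<lambda>\<omega>. (norm (c \<omega>))\<^sup>2)"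
    proof (rule int_sq_bound[OF fm cM SQ[of k] SQ[of k], of "(\<gamma> k * lam_hi k + (L + \<mu> k) * (\<gamma> k)\<^sup>2 * (lam_hi k)\<^sup>2) * norm (gf x0)"
          "(\<gamma> k * lam_hi k + (L + \<mu> k) * (\<gamma> k)\<^sup>2 * (lam_hi k)\<^sup>2) * (L + \<mu> k)" 0])
      have pos: "\<gamma> k > 0" "lam_hi k > 0" "\<mu> k > 0" using \<gamma>_pos lam_hi_pos \<mu>_pos by auto
      define C where "C = \<gamma> k * lam_hi k + (L + \<mu> k) * (\<gamma> k)\<^sup>2 * (lam_hi k)\<^sup>2"
      have C0: "C \<ge> 0" unfolding C_def using pos L0 by simp
      show "0 \<le> C * norm (gf x0)" "0 \<le> C * (L + \<mu> k)" "(0::real) \<le> 0" using C0 L0 pos by auto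
      show "AE \<omega> in M. norm (c \<omega>) \<le> C * norm (gf x0) + C * (L + \<mu> k) * norm (x k \<omega> - x0) + 0 * norm (x k \<omega> - x0)"
        using HA[of k]
      proof eventually_elim
        case (elim \<omega>)
        have h: "norm (H k \<omega> *v g k \<omega>) \<le> lam_hi k * norm (g k \<omega>)" using Hnorm elim by blast
        have "norm (c \<omega>) \<le> norm (\<gamma> k *\<^sub>R (H k \<omega> *v g k \<omega>)) + norm (((L + \<mu> k) * (\<gamma> k)\<^sup>2 * (lam_hi k)\<^sup>2) *\<^sub>R g k \<omega>)"
          unfolding c_def by (rule norm_triangle_ineq4)
        also have "\<dots> = \<gamma> k * norm (H k \<omega> *v g k \<omega>) + ((L + \<mu> k) * (\<gamma> k)\<^sup>2 * (lam_hi k)\<^sup>2) * norm (g k \<omega>)"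
          using pos L0 by simp
        also have "\<dots> \<le> \<gamma> k * (lam_hi k * norm (g k \<omega>)) + ((L + \<mu> k) * (\<gamma> k)\<^sup>2 * (lam_hi k)\<^sup>2) * norm (g k \<omega>)"
          using h pos by (simp add: mult_left_mono)
        also have "\<dots> = C * norm (g k \<omega>)" unfolding C_def by (simp add: algebra_simps)
        also have "\<dots> \<le> C * (norm (gf x0) + (L + \<mu> k) * norm (x k \<omega> - x0))"
          using gnorm[of k \<omega>] C0 by (rule mult_left_mono)
        finally show ?case by (simp add: algebra_simps)
      qed
    qed
    have iCW: "integrable M (\<lambda>\<omega>. c \<omega> $ i * wbar k \<omega> $ i)" for i
      by (rule int_prod[OF meas_nth[OF cM] meas_nth[OF wM] int_nth_sq[OF cM c2] int_nth_sq[OF wM wbar_sq_int]])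
    have iS: "integrable M S" unfolding S_def[abs_def] using iCW by auto
    have iW: "integrable M (\<lambda>\<omega>. wbar k \<omega> $ i)" for i
      using integrable_inner_left[of "axis i 1" M "wbar k", OF wbar_int] by (simp add: inner_axis)
    have e1: "AE \<omega> in M. real_cond_exp M (Fil k) T \<omega> \<le> real_cond_exp M (Fil k) (\<lambda>\<omega>. A \<omega> + S \<omega> + Q \<omega>) \<omega>"
      using S.real_cond_exp_mono[OF TR iT] iA iS iQ by auto
    have e2: "AE \<omega> in M. real_cond_exp M (Fil k) (\<lambda>\<omega>. A \<omega> + S \<omega> + Q \<omega>) \<omega>
        = real_cond_exp M (Fil k) (\<lambda>\<omega>. A \<omega> + S \<omega>) \<omega> + real_cond_exp M (Fil k) Q \<omega>"
      using S.real_cond_exp_add[of "\<lambda>\<omega>. A \<omega> + S \<omega>" Q] iA iS iQ by auto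
    have e3: "AE \<omega> in M. real_cond_exp M (Fil k) (\<lambda>\<omega>. A \<omega> + S \<omega>) \<omega>
        = real_cond_exp M (Fil k) A \<omega> + real_cond_exp M (Fil k) S \<omega>"
      using S.real_cond_exp_add[OF iA iS] by simp
    have e4: "AE \<omega> in M. real_cond_exp M (Fil k) A \<omega> = A \<omega>"
      by (rule S.real_cond_exp_F_meas[OF iA AF])
    have e5: "AE \<omega> in M. real_cond_exp M (Fil k) S \<omega> = (\<Sum>i\<in>UNIV. real_cond_exp M (Fil k) (\<lambda>\<omega>. c \<omega> $ i * wbar k \<omega> $ i) \<omega>)"
      unfolding S_def[abs_def] by (rule S.real_cond_exp_sum[OF iCW])
    have e6: "AE \<omega> in M. \<forall>i. real_cond_exp M (Fil k) (\<lambda>\<omega>. c \<omega> $ i * wbar k \<omega> $ i) \<omega> = c \<omega> $ i * real_cond_exp M (Fil k) (\<lambda>\<omega>. wbar k \<omega> $ i) \<omega>"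
      unfolding AE_all_countable
      by (intro allI S.real_cond_exp_mult[OF meas_nth[OF cF] meas_nth[OF wM] iCW])
    have e7: "AE \<omega> in M. \<forall>i. real_cond_exp M (Fil k) (\<lambda>\<omega>. wbar k \<omega> $ i) \<omega> = 0"
      unfolding AE_all_countable using wbar_unbiased by blast
    have e8: "AE \<omega> in M. real_cond_exp M (Fil k) Q \<omega> = K * real_cond_exp M (Fil k) (\<lambda>\<omega>. (norm (wbar k \<omega>))\<^sup>2) \<omega>"
      unfolding Q_def[abs_def] by (rule S.real_cond_exp_cmult[OF wbar_sq_int])
    note e9 = wbar_var[of k]
    have fin: "(L + \<mu> k) * (lam_hi k)\<^sup>2 * V / (2 * real (N k)) * (\<gamma> k)\<^sup>2 = K * (V / real (N k))" for V
      unfolding K_def by (simp add: field_simps)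
    show ?thesis
      using e1 e2 e3 e4 e5 e6 e7 e8 e9
    proof eventually_elim
      case (elim \<omega>)
      have "real_cond_exp M (Fil k) T \<omega> \<le> A \<omega> + K * real_cond_exp M (Fil k) (\<lambda>\<omega>. (norm (wbar k \<omega>))\<^sup>2) \<omega>"
        using elim by simp
      also have "\<dots> \<le> A \<omega> + K * ((\<nu>1\<^sup>2 * (norm (x k \<omega>))\<^sup>2 + \<nu>2\<^sup>2) / real (N k))"
        using mult_left_mono[OF elim(9) K0] by linarith
      finally show ?case unfolding fin T_def[symmetric] fs dd A_def dd_def by simp
    qed
  qed
qed


end
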